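(* Let $\mathcal N$ be a feedforward ANN consisting of MatMul layers (each a convolution or fully-connected linear map with bias followed by batch normalization) alternating with QCFS activation layers, beginning with a MatMul layer followed by a QCFS layer and ending with a MatMul layer, where the $n$-th QCFS layer has quantization step $L_n$ and threshold $\theta_n$. Let $\mathcal M$ be the PASC formulation of $\mathcal N$ (described in the context). Then $\mathcal M$ and $\mathcal N$ are mathematically equivalent: for every input $z$ and every output class $c\in\mathbf C$, $f^{z}_{\mathcal M}(c)=f^{z}_{\mathcal N}(c)$.
   Context: QCFS activation with quantization step $L$ and threshold $\theta$: $\widehat h(y)=\theta\,\mathrm{clip}\!\left(\frac1L\left\lfloor\frac{yL}{\theta}+\frac12\right\rfloor,0,1\right)$ elementwise, with $\mathrm{clip}(u,0,1)=\min(\max(u,0),1)$. $H(y)=1$ if $y\ge0$, else $0$. A MatMul layer computes $y\mapsto\gamma\frac{y*W+b-\mu}{\sqrt{\sigma^2+\epsilon}}+\beta$. PASC formulation $\mathcal M$ of $\mathcal N$: (i) the first MatMul layer is computed as in $\mathcal N$ on the input, giving $X$; the first QCFS layer (step $L_1$, threshold $\theta_1$) is replaced by: $\theta^*=\theta_1/L_1$, $\mathrm{mem}(0)=\widehat h(X)$, and for $t=1..L_1$, $s(t)=H(\mathrm{mem}(t-1)-\theta^* )\theta^*$, $\mathrm{mem}(t)=\mathrm{mem}(t-1)-s(t)$, producing $L_1$ timesteps. (ii) Every subsequent MatMul layer receiving $L$ timesteps $z_1,\dots,z_L$ outputs, for each $i$, $z_i'=\gamma\frac{z_i*W+b/L-\mu/L}{\sqrt{\sigma^2+\epsilon}}+\beta/L$.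 (iii) Every subsequent QCFS layer with step $L_n$ and threshold $\theta_n$, receiving $L_{n-1}$ timesteps $X[1..L_{n-1}]$, is replaced by the following elementwise procedure: $\theta^*=\theta_n/L_n$, $m=\theta^*/2$, $s=0$; Stage 1: for $t=1..L_{n-1}$: $m\leftarrow m+X[t]$, and if $m\ge\theta^*$ then $s\leftarrow s+\theta^*$, $m\leftarrow m-\theta^*$; Stage 2: for $t=1..\max(L_{n-1},L_n)-1$: if $m\ge\theta^*$ then $s\leftarrow s+\theta^*$, $m\leftarrow m-\theta^*$, else if $m<0$ then $s\leftarrow s-\theta^*$, $m\leftarrow m+\theta^*$; Stage 3: $\mathrm{mem}(0)=s$ and for $t=1..L_n$, output $H(\mathrm{mem}(t-1)-\theta^* )\theta^*$ at timestep $t$ and subtract it from $\mathrm{mem}$. (iv) If the final MatMul layer outputs $L$ timesteps $z_1,\dots,z_L$, the SNN output vector is $z^*=\frac1L\sum_{i=1}^L z_i$. Classification map: for a model with final output vector $v$ (the ANN's final layer output for $\mathcal N$, the vector $z^*$ for $\mathcal M$) on input $z$, $f^z(c)=v[c]/\sum_{c'\in\mathbf C}v[c']$ for each class $c$ in the set $\mathbf C$ of output classes. Two models are mathematically equivalent if their classification maps coincide for every input. *)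

theory Defs
  imports Complex_Main
begin

(* Vectors (activations) are functions nat => real; a MatMul layer with
   input dimension mm_din reads coordinates 0..mm_din-1 of its input.
   The linear part y*W is an arbitrary real matrix (this covers both
   fully-connected layers and convolutions, which are special linear maps). *)
record matmul =
  mm_din   :: nat
  mm_W     :: "nat \<Rightarrow> nat \<Rightarrow> real"
  mm_b     :: "nat \<Rightarrow> real"
  mm_gamma :: "nat \<Rightarrow> real"
  mm_beta  :: "nat \<Rightarrow> real"
  mm_mu    :: "nat \<Rightarrow> real"
  mm_var   :: "nat \<Rightarrow> real"
  mm_eps   :: real

definition lin :: "matmul \<Rightarrow> (nat \<Rightarrow> real) \<Rightarrow> nat \<Rightarrow> real" where
  "lin M y i = (\<Sum>j<mm_din M. y j * mm_W M j i)"

definition mm_apply :: "matmul \<Rightarrow> (nat \<Rightarrow> real) \<Rightarrow> nat \<Rightarrow> real" where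
  "mm_apply M y = (\<lambda>i. mm_gamma M i * (lin M y i + mm_b M i - mm_mu M i)
                         / sqrt (mm_var M i + mm_eps M) + mm_beta M i)"

(* PASC MatMul layer on one timestep, when L timesteps are received *)
definition mm_apply_t :: "matmul \<Rightarrow> nat \<Rightarrow> (nat \<Rightarrow> real) \<Rightarrow> nat \<Rightarrow> real" where
  "mm_apply_t M L z = (\<lambda>i. mm_gamma M i * (lin M z i + mm_b M i / real L - mm_mu M i / real L)
                         / sqrt (mm_var M i + mm_eps M) + mm_beta M i / real L)"

definition clip01 :: "real \<Rightarrow> real" where
  "clip01 u = min (max u 0) 1"

definition qcfs :: "nat \<Rightarrow> real \<Rightarrow> real \<Rightarrow> real" where
  "qcfs L \<theta> y = \<theta> * clip01 ((1 / real L) * of_int \<lfloor>y * real L / \<theta> + 1/2\<rfloor>)"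

definition Hv :: "real \<Rightarrow> real" where
  "Hv y = (if y \<ge> 0 then 1 else 0)"

primrec spike_mem :: "real \<Rightarrow> real \<Rightarrow> nat \<Rightarrow> real" where
  "spike_mem th mem0 0 = mem0"
| "spike_mem th mem0 (Suc t) =
     spike_mem th mem0 t - Hv (spike_mem th mem0 t - th) * th"

(* spikes s(1..Ln), as a list of length Ln; element k is timestep k+1 *)
definition spike_gen :: "nat \<Rightarrow> real \<Rightarrow> real \<Rightarrow> real list" where
  "spike_gen Ln th mem0 = map (\<lambda>t. Hv (spike_mem th mem0 t - th) * th) [0..<Ln]"

definition stage1_step :: "real \<Rightarrow> real \<times> real \<Rightarrow> real \<Rightarrow> real \<times> real" where
  "stage1_step th st x = (let m = fst st + x in
      if m \<ge> th then (m - th, snd st + th) else (m, snd st))"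

definition stage1 :: "real \<Rightarrow> real list \<Rightarrow> real \<times> real" where
  "stage1 th X = foldl (stage1_step th) (th / 2, 0) X"

definition stage2_step :: "real \<Rightarrow> real \<times> real \<Rightarrow> real \<times> real" where
  "stage2_step th st = (let m = fst st; s = snd st in
      if m \<ge> th then (m - th, s + th)
      else if m < 0 then (m + th, s - th) else (m, s))"

(* PASC neuron replacing a QCFS layer (step Ln, threshold thn), elementwise;
   X is the list of L_{n-1} = length X input timesteps *)
definition pasc_neuron :: "nat \<Rightarrow> real \<Rightarrow> real list \<Rightarrow> real list" where
  "pasc_neuron Ln thn X =
     (let th = thn / real Ln;
          st = (stage2_step th ^^ (max (length X) Ln - 1)) (stage1 th X)
      in spike_gen Ln th (snd st))"

(* Spike trains: list of vectors, one per timestep *)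
definition pasc_qcfs :: "nat \<Rightarrow> real \<Rightarrow> (nat \<Rightarrow> real) list \<Rightarrow> (nat \<Rightarrow> real) list" where
  "pasc_qcfs Ln thn zs =
     map (\<lambda>t i. pasc_neuron Ln thn (map (\<lambda>z. z i) zs) ! t) [0..<Ln]"

(* first QCFS layer replaced: mem(0) = hhat(X), L1 timesteps *)
definition pasc_first :: "nat \<Rightarrow> real \<Rightarrow> (nat \<Rightarrow> real) \<Rightarrow> (nat \<Rightarrow> real) list" where
  "pasc_first L1 th1 X =
     map (\<lambda>t i. spike_gen L1 (th1 / real L1) (qcfs L1 th1 (X i)) ! t) [0..<L1]"

definition mm_step :: "matmul \<Rightarrow> (nat \<Rightarrow> real) list \<Rightarrow> (nat \<Rightarrow> real) list" where
  "mm_step M zs = map (mm_apply_t M (length zs)) zs"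

(* The ANN N: MatMul layers ms (length k+1), QCFS layers qs = [(L_n, theta_n)] (length k) *)
fun ann_eval :: "matmul list \<Rightarrow> (nat \<times> real) list \<Rightarrow> (nat \<Rightarrow> real) \<Rightarrow> nat \<Rightarrow> real" where
  "ann_eval (M # Ms) ((L, \<theta>) # qs) y = ann_eval Ms qs (\<lambda>i. qcfs L \<theta> (mm_apply M y i))"
| "ann_eval [M] [] y = mm_apply M y"
| "ann_eval _ _ y = y"

fun snn_rest :: "matmul list \<Rightarrow> (nat \<times> real) list \<Rightarrow> (nat \<Rightarrow> real) list \<Rightarrow> (nat \<Rightarrow> real) list" where
  "snn_rest (M # Ms) ((L, \<theta>) # qs) zs = snn_rest Ms qs (pasc_qcfs L \<theta> (mm_step M zs))"
| "snn_rest [M] [] zs = mm_step M zs"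
| "snn_rest _ _ zs = zs"

fun snn_eval :: "matmul list \<Rightarrow> (nat \<times> real) list \<Rightarrow> (nat \<Rightarrow> real) \<Rightarrow> (nat \<Rightarrow> real) list" where
  "snn_eval (M # Ms) ((L, \<theta>) # qs) z = snn_rest Ms qs (pasc_first L \<theta> (mm_apply M z))"
| "snn_eval _ _ z = []"

definition snn_out :: "matmul list \<Rightarrow> (nat \<times> real) list \<Rightarrow> (nat \<Rightarrow> real) \<Rightarrow> nat \<Rightarrow> real" where
  "snn_out Ms qs z = (let zs = snn_eval Ms qs z in
      (\<lambda>i. (1 / real (length zs)) * (\<Sum>k<length zs. (zs ! k) i)))"

definition classify :: "(nat \<Rightarrow> real) \<Rightarrow> nat set \<Rightarrow> nat \<Rightarrow> real" where
  "classify v C c = v c / (\<Sum>c'\<in>C. v c')"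

end

theory Submission imports Defs begin

lemma spike_mem_int:
  assumes "th > 0"
  shows "spike_mem th (of_int k * th) t = th * of_int (k - min (int t) (max k 0))"
proof (induction t)
  case 0 then show ?case by (simp add: algebra_simps)
next
  case (Suc t)
  show ?case
  proof (cases "int t < k")
    case True
    then have "min (int t) (max k 0) = int t" by simp
    then have "spike_mem th (of_int k * th) t - th = th * of_int (k - int t - 1)"
      using Suc by (simp add: algebra_simps)
    moreover have "k - int t - 1 \<ge> 0" using True by simp
    ultimately have "spike_mem th (of_int k * th) t - th \<ge> 0"
      using assms by simp
    then show ?thesis using Suc True by (simp add: Hv_def algebra_simps)
  next
    case False
    then have "spike_mem th (of_int k * th) t - th < 0"
      using Suc assms
      by (smt (verit, ccfv_threshold) mult_le_cancel_left1 of_int_le_0_iff)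
    then show ?thesis using Suc False by (simp add: Hv_def algebra_simps)
  qed
qed

lemma spike_sum:
  assumes "th > 0"
  shows "sum_list (spike_gen L th (of_int k * th)) = th * of_int (min (max k 0) (int L))"
proof (induction L)
  case 0 then show ?case using assms by (simp add: spike_gen_def)
next
  case (Suc L)
  have h: "Hv (spike_mem th (of_int k * th) L - th) = (if int L < k then 1 else 0)"
  proof (cases "int L < k")
    case True
    then have "min (int L) (max k 0) = int L" by simp
    then have "spike_mem th (of_int k * th) L - th = th * of_int (k - int L - 1)"
      using spike_mem_int[OF assms, of k L] by (simp add: algebra_simps)
    moreover have "k - int L - 1 \<ge> 0" using True by simp
    ultimately show ?thesis using assms True by (simp add: Hv_def)
  next
    case False
    then have "spike_mem th (of_int k * th) L - th < 0"
      using assms spike_mem_int[OF assms, of k L]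
      by (smt (verit, ccfv_threshold) mult_le_cancel_left1 of_int_le_0_iff)
    then show ?thesis using False by (simp add: Hv_def)
  qed
  have "sum_list (spike_gen (Suc L) th (of_int k * th)) =
        sum_list (spike_gen L th (of_int k * th)) + Hv (spike_mem th (of_int k * th) L - th) * th"
    by (simp add: spike_gen_def)
  then show ?case using Suc h by (auto simp: algebra_simps)
qed

lemma qcfs_clamp:
  assumes "L \<ge> 1" "\<theta> > 0"
  shows "qcfs L \<theta> y = (\<theta> / real L) * of_int (min (max \<lfloor>y / (\<theta> / real L) + 1/2\<rfloor> 0) (int L))"
proof -
  define q where "q = \<lfloor>y / (\<theta> / real L) + 1/2\<rfloor>"
  have e: "y * real L / \<theta> = y / (\<theta> / real L)" by simp
  have "qcfs L \<theta> y = \<theta> * min (max (of_int q / real L) 0) 1"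
    unfolding qcfs_def clip01_def q_def e by simp
  also have "\<dots> = (\<theta> / real L) * of_int (min (max q 0) (int L))"
    using assms by (cases "q \<le> 0"; cases "q \<ge> int L") (auto simp: field_simps)
  finally show ?thesis unfolding q_def .
qed

lemma stage1_inv:
  assumes "th > 0"
  shows "\<exists>j::nat. snd (stage1 th X) = real j * th \<and> j \<le> length X \<and>
     fst (stage1 th X) + snd (stage1 th X) = th / 2 + sum_list X \<and>
     (X \<noteq> [] \<longrightarrow> (fst (stage1 th X) \<ge> th \<longrightarrow> j \<ge> 1) \<and>
        (fst (stage1 th X) < 0 \<longrightarrow> j + 1 \<le> length X))"
proof (induction X rule: rev_induct)
  case Nil then show ?case by (simp add: stage1_def)
next
  case (snoc x xs)
  then obtain j where j: "snd (stage1 th xs) = real j * th" "j \<le> length xs"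
     "fst (stage1 th xs) + snd (stage1 th xs) = th / 2 + sum_list xs" by blast
  define m where "m = fst (stage1 th xs) + x"
  have st: "stage1 th (xs @ [x]) = stage1_step th (stage1 th xs) x"
    by (simp add: stage1_def)
  show ?case
  proof (cases "m \<ge> th")
    case True
    then have "stage1 th (xs @ [x]) = (m - th, snd (stage1 th xs) + th)"
      unfolding st stage1_step_def m_def Let_def by simp
    then show ?thesis using j True assms
      by (intro exI[of _ "Suc j"]) (auto simp: algebra_simps m_def)
  next
    case False
    then have "stage1 th (xs @ [x]) = (m, snd (stage1 th xs))"
      unfolding st stage1_step_def m_def Let_def by simp
    then show ?thesis using j False assms
      by (intro exI[of _ j]) (auto simp: algebra_simps m_def)
  qed
qed

lemma stage2_inv:
  assumes "th > 0"
  shows "\<exists>k'::int. snd ((stage2_step th ^^ n) (m, of_int k * th)) = of_int k' * th \<and>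
    fst ((stage2_step th ^^ n) (m, of_int k * th)) + snd ((stage2_step th ^^ n) (m, of_int k * th))
      = m + of_int k * th \<and>
    ((0 \<le> fst ((stage2_step th ^^ n) (m, of_int k * th)) \<and> fst ((stage2_step th ^^ n) (m, of_int k * th)) < th)
     \<or> (fst ((stage2_step th ^^ n) (m, of_int k * th)) \<ge> th \<and> m \<ge> th \<and> k' = k + int n)
     \<or> (fst ((stage2_step th ^^ n) (m, of_int k * th)) < 0 \<and> m < 0 \<and> k' = k - int n))"
proof (induction n)
  case 0 then show ?case by auto
next
  case (Suc n)
  define p where "p = (stage2_step th ^^ n) (m, of_int k * th)"
  from Suc obtain k' where k': "snd p = of_int k' * th" "fst p + snd p = m + of_int k * th"
    "(0 \<le> fst p \<and> fst p < th) \<or> (fst p \<ge> th \<and> m \<ge> th \<and> k' = k + int n)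
     \<or> (fst p < 0 \<and> m < 0 \<and> k' = k - int n)" unfolding p_def by blast
  have e: "(stage2_step th ^^ Suc n) (m, of_int k * th) = stage2_step th p"
    by (simp add: p_def)
  show ?case
  proof (cases "fst p \<ge> th")
    case True
    then have "stage2_step th p = (fst p - th, snd p + th)" by (simp add: stage2_step_def Let_def)
    then show ?thesis unfolding e using k' True assms
      by (intro exI[of _ "k' + 1"]) (auto simp: algebra_simps)
  next
    case F1: False
    show ?thesis
    proof (cases "fst p < 0")
      case True
      then have "stage2_step th p = (fst p + th, snd p - th)" using F1 by (simp add: stage2_step_def Let_def)
      then show ?thesis unfolding e using k' True assms
        by (intro exI[of _ "k' - 1"]) (auto simp: algebra_simps)
    next
      case False
      then have "stage2_step th p = p" using F1 by (simp add: stage2_step_def Let_def)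
      then show ?thesis unfolding e using k' False F1 assms
        by (intro exI[of _ "k'"]) auto
    qed
  qed
qed

lemma pasc_sum:
  assumes "Ln \<ge> 1" "thn > 0" "X \<noteq> []"
  shows "sum_list (pasc_neuron Ln thn X) = qcfs Ln thn (sum_list X)"
proof -
  define th where "th = thn / real Ln"
  have th: "th > 0" using assms by (simp add: th_def)
  define T where "T = max (length X) Ln - 1"
  define m where "m = fst (stage1 th X)"
  from stage1_inv[OF th, of X] obtain j :: nat where j:
    "snd (stage1 th X) = real j * th" "j \<le> length X"
    "m + snd (stage1 th X) = th / 2 + sum_list X"
    "m \<ge> th \<longrightarrow> j \<ge> 1" "m < 0 \<longrightarrow> j + 1 \<le> length X"
    using assms(3) unfolding m_def by blast
  have s1: "stage1 th X = (m, of_int (int j) * th)"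
    using j(1) unfolding m_def by (simp add: prod_eq_iff)
  define st where "st = (stage2_step th ^^ T) (stage1 th X)"
  from stage2_inv[OF th, of T m "int j"] obtain k' where k':
    "snd st = of_int k' * th" "fst st + snd st = m + of_int (int j) * th"
    "(0 \<le> fst st \<and> fst st < th) \<or> (fst st \<ge> th \<and> m \<ge> th \<and> k' = int j + int T)
     \<or> (fst st < 0 \<and> m < 0 \<and> k' = int j - int T)"
    unfolding st_def s1 by blast
  have pn: "pasc_neuron Ln thn X = spike_gen Ln th (of_int k' * th)"
    unfolding pasc_neuron_def Let_def th_def[symmetric] T_def[symmetric] st_def[symmetric] k'(1) ..
  have q: "qcfs Ln thn (sum_list X) = th * of_int (min (max \<lfloor>sum_list X / th + 1/2\<rfloor> 0) (int Ln))"
    using qcfs_clamp[OF assms(1,2)] th_def by simp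
  have "sum_list X / th + 1/2 = fst st / th + of_int k'"
    using k'(1,2) j(1,3) th by (simp add: field_simps)
  then have fl: "\<lfloor>sum_list X / th + 1/2\<rfloor> = \<lfloor>fst st / th\<rfloor> + k'" by simp
  have "min (max \<lfloor>sum_list X / th + 1/2\<rfloor> 0) (int Ln) = min (max k' 0) (int Ln)"
  proof -
    consider "0 \<le> fst st \<and> fst st < th" | "fst st \<ge> th \<and> m \<ge> th \<and> k' = int j + int T"
      | "fst st < 0 \<and> m < 0 \<and> k' = int j - int T" using k'(3) by blast
    then show ?thesis
    proof cases
      case 1
      then have "\<lfloor>fst st / th\<rfloor> = 0" using th by (simp add: floor_eq_iff)
      then show ?thesis using fl by simp
    next
      case 2
      then have "fst st / th \<ge> 1" using th by simp
      then have "\<lfloor>fst st / th\<rfloor> \<ge> 1" by linarith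
      moreover have "k' \<ge> int Ln" using 2 j(4) unfolding T_def by auto
      ultimately have a: "\<lfloor>fst st / th\<rfloor> + k' \<ge> int Ln" by linarith
      show ?thesis unfolding fl using a \<open>k' \<ge> int Ln\<close> by (smt (verit))
    next
      case 3
      then have "fst st / th < 0" using th by (simp add: divide_neg_pos)
      then have "\<lfloor>fst st / th\<rfloor> \<le> -1" by linarith
      moreover have "k' \<le> 0" using 3 j(5) unfolding T_def by auto
      ultimately show ?thesis using fl by simp
    qed
  qed
  then show ?thesis unfolding pn q spike_sum[OF th] by simp
qed

definition vs :: "(nat \<Rightarrow> real) list \<Rightarrow> nat \<Rightarrow> real" where
  "vs zs i = sum_list (map (\<lambda>z. z i) zs)"

lemma lin_sum: "sum_list (map (\<lambda>z. lin M z i) zs) = lin M (vs zs) i"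
proof (induction zs)
  case Nil then show ?case by (simp add: lin_def vs_def)
next
  case (Cons a zs)
  then show ?case by (simp add: lin_def vs_def sum.distrib distrib_right)
qed

lemma sum_affine: "sum_list (map (\<lambda>z. a * f z + c) zs) = a * sum_list (map f zs) + real (length zs) * c"
  by (induction zs) (auto simp: algebra_simps)

lemma mm_step_sum:
  assumes "zs \<noteq> []"
  shows "vs (mm_step M zs) i = mm_apply M (vs zs) i" "length (mm_step M zs) = length zs"
proof -
  define a where "a = mm_gamma M i / sqrt (mm_var M i + mm_eps M)"
  define n where "n = real (length zs)"
  have n: "n > 0" using assms by (simp add: n_def)
  have e: "\<And>z. mm_apply_t M (length zs) z i = a * lin M z i
     + (a * (mm_b M i / n - mm_mu M i / n) + mm_beta M i / n)"
    unfolding mm_apply_t_def a_def n_def by (simp add: algebra_simps add_divide_distrib diff_divide_distrib)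
  have "vs (mm_step M zs) i = sum_list (map (\<lambda>z. a * lin M z i
     + (a * (mm_b M i / n - mm_mu M i / n) + mm_beta M i / n)) zs)"
    unfolding vs_def mm_step_def by (simp add: e o_def)
  also have "\<dots> = a * lin M (vs zs) i + n * (a * (mm_b M i / n - mm_mu M i / n) + mm_beta M i / n)"
    unfolding sum_affine lin_sum n_def ..
  also have "\<dots> = a * (lin M (vs zs) i + mm_b M i - mm_mu M i) + mm_beta M i"
    using n by (simp add: field_simps)
  also have "\<dots> = mm_apply M (vs zs) i"
    unfolding mm_apply_def a_def by simp
  finally show "vs (mm_step M zs) i = mm_apply M (vs zs) i" .
  show "length (mm_step M zs) = length zs" by (simp add: mm_step_def)
qed

lemma vs_nth: "vs zs i = (\<Sum>k<length zs. (zs ! k) i)"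
  unfolding vs_def by (simp add: sum_list_sum_nth atLeast0LessThan)

lemma pasc_qcfs_sum:
  assumes "L \<ge> 1" "\<theta> > 0" "zs \<noteq> []"
  shows "vs (pasc_qcfs L \<theta> zs) i = qcfs L \<theta> (vs zs i)" "length (pasc_qcfs L \<theta> zs) = L"
proof -
  have len: "length (pasc_neuron L \<theta> X) = L" for X
    by (simp add: pasc_neuron_def Let_def spike_gen_def)
  have "vs (pasc_qcfs L \<theta> zs) i = (\<Sum>t<L. pasc_neuron L \<theta> (map (\<lambda>z. z i) zs) ! t)"
    unfolding vs_nth pasc_qcfs_def by simp
  also have "\<dots> = sum_list (pasc_neuron L \<theta> (map (\<lambda>z. z i) zs))"
    by (simp add: sum_list_sum_nth len atLeast0LessThan)
  also have "\<dots> = qcfs L \<theta> (vs zs i)"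
    using pasc_sum[OF assms(1,2)] assms(3) by (simp add: vs_def)
  finally show "vs (pasc_qcfs L \<theta> zs) i = qcfs L \<theta> (vs zs i)" .
  show "length (pasc_qcfs L \<theta> zs) = L" by (simp add: pasc_qcfs_def)
qed

lemma pasc_first_sum:
  assumes "L \<ge> 1" "\<theta> > 0"
  shows "vs (pasc_first L \<theta> X) i = qcfs L \<theta> (X i)" "length (pasc_first L \<theta> X) = L"
proof -
  have th: "\<theta> / real L > 0" using assms by simp
  define k where "k = min (max \<lfloor>X i / (\<theta> / real L) + 1/2\<rfloor> 0) (int L)"
  have q: "qcfs L \<theta> (X i) = of_int k * (\<theta> / real L)"
    unfolding qcfs_clamp[OF assms] k_def by simp
  have k: "min (max k 0) (int L) = k" unfolding k_def by simp
  have len: "length (spike_gen L th m) = L" for th m by (simp add: spike_gen_def)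
  have "vs (pasc_first L \<theta> X) i = (\<Sum>t<L. spike_gen L (\<theta> / real L) (qcfs L \<theta> (X i)) ! t)"
    unfolding vs_nth pasc_first_def by simp
  also have "\<dots> = sum_list (spike_gen L (\<theta> / real L) (qcfs L \<theta> (X i)))"
    by (simp add: sum_list_sum_nth len atLeast0LessThan)
  also have "\<dots> = qcfs L \<theta> (X i)"
    unfolding q spike_sum[OF th] k by simp
  finally show "vs (pasc_first L \<theta> X) i = qcfs L \<theta> (X i)" .
  show "length (pasc_first L \<theta> X) = L" by (simp add: pasc_first_def)
qed

lemma main_ind:
  assumes "length Ms = length qs + 1" "\<forall>(L, \<theta>) \<in> set qs. L \<ge> 1 \<and> \<theta> > 0"
    "zs \<noteq> []"
  shows "snn_rest Ms qs zs \<noteq> [] \<and> vs (snn_rest Ms qs zs) = ann_eval Ms qs (vs zs)"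
  using assms
proof (induction qs arbitrary: Ms zs)
  case Nil
  then obtain M where M: "Ms = [M]" by (cases Ms) auto
  show ?case using Nil(3) mm_step_sum[OF Nil(3), of M] unfolding M by auto
next
  case (Cons q qs)
  obtain L \<theta> where q: "q = (L, \<theta>)" by (cases q)
  from Cons(2) obtain M Ms' where M: "Ms = M # Ms'" "length Ms' = length qs + 1" by (cases Ms) auto
  have L: "L \<ge> 1" "\<theta> > 0" using Cons(3) q by auto
  define zs' where "zs' = pasc_qcfs L \<theta> (mm_step M zs)"
  have ne: "mm_step M zs \<noteq> []" using Cons(4) by (simp add: mm_step_def)
  have z1: "zs' \<noteq> []" unfolding zs'_def using pasc_qcfs_sum(2)[OF L ne] L by (cases "pasc_qcfs L \<theta> (mm_step M zs)") auto
  have z2: "vs zs' = (\<lambda>i. qcfs L \<theta> (mm_apply M (vs zs) i))"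
    unfolding zs'_def using pasc_qcfs_sum(1)[OF L ne] mm_step_sum(1)[OF Cons(4)] by auto
  have IH: "snn_rest Ms' qs zs' \<noteq> [] \<and> vs (snn_rest Ms' qs zs') = ann_eval Ms' qs (vs zs')"
    using Cons.IH[OF M(2) _ z1] Cons(3) by auto
  show ?case unfolding M q using IH z2 by (simp add: zs'_def)
qed

theorem theorem4:
  fixes Ms :: "matmul list" and qs :: "(nat \<times> real) list"
    and nC :: nat and z :: "nat \<Rightarrow> real" and c :: nat
  assumes "qs \<noteq> []"
    and "length Ms = length qs + 1"
    and "\<forall>(L, \<theta>) \<in> set qs. L \<ge> 1 \<and> \<theta> > 0"
    and "c < nC"
  shows "classify (snn_out Ms qs z) {..<nC} c = classify (ann_eval Ms qs z) {..<nC} c"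
proof -
  obtain q qs' where q: "qs = q # qs'" using assms(1) by (cases qs) auto
  obtain L \<theta> where q2: "q = (L, \<theta>)" by (cases q)
  obtain M Ms' where M: "Ms = M # Ms'" "length Ms' = length qs' + 1"
    using assms(2) q by (cases Ms) auto
  have L: "L \<ge> 1" "\<theta> > 0" using assms(3) q q2 by auto
  define X where "X = mm_apply M z"
  define zs where "zs = pasc_first L \<theta> X"
  have zs1: "zs \<noteq> []" using pasc_first_sum(2)[OF L, of X] L unfolding zs_def by auto
  have zs2: "vs zs = (\<lambda>i. qcfs L \<theta> (X i))" using pasc_first_sum(1)[OF L] unfolding zs_def by auto
  have R: "snn_rest Ms' qs' zs \<noteq> [] \<and> vs (snn_rest Ms' qs' zs) = ann_eval Ms' qs' (vs zs)"
    using main_ind[OF M(2) _ zs1] assms(3) q by auto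
  define v where "v = ann_eval Ms qs z"
  define n where "n = real (length (snn_rest Ms' qs' zs))"
  have n: "n > 0" using R by (simp add: n_def)
  have sv: "snn_out Ms qs z = (\<lambda>i. (1 / n) * v i)"
    unfolding snn_out_def M q q2 v_def n_def
    using R zs2 by (simp add: vs_nth[symmetric] X_def zs_def)
  show ?thesis unfolding sv classify_def v_def[symmetric]
    using n by (simp add: sum_distrib_left[symmetric] sum_divide_distrib[symmetric])
qed

end
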